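(* Let $q$ be a prime power, $\ell\ge1$, $\beta\in\{1,-1\}\subseteq\mathbb{F}_q$ of multiplicative order $r$, assume $q\equiv 1\pmod{r\ell}$, and let $\omega\in\mathbb{F}_q$ be a primitive $r\ell$-th root of unity with $\omega^\ell=\beta$. For $0\le k\le \ell-1$ let $\eta_k(y)=\prod_{0\le j\le\ell-1,\,j\ne k}\frac{y-\omega^{1+jr}}{\omega^{1+kr}-\omega^{1+jr}}$ (a polynomial of degree $\ell-1$), and let $\eta_k^*(y)=y^{\ell-1}\eta_k(1/y)$ be its reciprocal polynomial. Then for each $k=0,1,\dots,\ell-1$ there is a constant $b_k\in\mathbb{F}_q^*$ such that $$\eta_k^*(y)=\begin{cases} b_k\,\eta_{\ell-2-k}(y) & \text{if } \beta=1,\\ b_k\,\eta_{\ell-1-k}(y) & \text{if } \beta=-1,\end{cases}$$ where subscripts are read modulo $\ell$. *)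

theory Defs
  imports "HOL-Computational_Algebra.Polynomial"
begin

definition eta :: "'a::field \<Rightarrow> nat \<Rightarrow> nat \<Rightarrow> nat \<Rightarrow> 'a poly" where
  "eta w r l k = (\<Prod>j\<in>{0..<l} - {k}.
      smult (inverse (w ^ (1 + k * r) - w ^ (1 + j * r))) [:- (w ^ (1 + j * r)), 1:])"

(* reciprocal w.r.t. degree bound n: y^n * p(1/y), written coefficientwise *)
definition recip :: "nat \<Rightarrow> 'a::comm_ring_1 poly \<Rightarrow> 'a poly" where
  "recip n p = (\<Sum>i\<le>n. monom (coeff p i) (n - i))"

definition idx_mod :: "int \<Rightarrow> nat \<Rightarrow> nat" where
  "idx_mod i l = nat (i mod int l)"

end

theory Submission imports Defs begin

lemma recip_eq: "recip (degree p) p = reflect_poly p"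
proof (rule poly_eqI)
  fix m
  have "coeff (recip (degree p) p) m = (\<Sum>i\<le>degree p. if i = degree p - m \<and> m \<le> degree p then coeff p i else 0)"
    unfolding recip_def coeff_sum coeff_monom by (intro sum.cong) auto
  also have "\<dots> = coeff (reflect_poly p) m"
    by (auto simp: coeff_reflect_poly sum.delta' if_distrib cong: if_cong)
  finally show "coeff (recip (degree p) p) m = coeff (reflect_poly p) m" .
qed

lemma refl_lin: "(x::'a::field) \<noteq> 0 \<Longrightarrow> reflect_poly [:-x,1:] = smult (-x) [:-inverse x, 1:]"
  by (simp add: reflect_poly_pCons' monom_altdef)

lemma main:
  fixes \<omega> :: "'a::field" and l r d :: nat
  assumes l: "l \<ge> 1" and r: "r > 0" and rd: "r * d = 2"
    and w1: "\<omega> ^ (r * l) = 1" and wp: "\<forall>m. 0 < m \<and> m < r * l \<longrightarrow> \<omega> ^ m \<noteq> 1"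
    and k: "k < l"
  shows "\<exists>b. b \<noteq> 0 \<and> recip (l - 1) (eta \<omega> r l k) = smult b (eta \<omega> r l (idx_mod (int l - int d - int k) l))"
proof -
  define x where "x j = \<omega> ^ (1 + j * r)" for j
  define A where "A = {0..<l}"
  define \<sigma> where "\<sigma> j = idx_mod (int l - int d - int j) l" for j
  have w0: "\<omega> \<noteq> 0" using w1 l r by (cases "\<omega> = 0") (auto simp: power_0_left)
  have x0: "x j \<noteq> 0" for j using w0 by (simp add: x_def)
  have xinj: "x i = x j \<Longrightarrow> i < l \<Longrightarrow> j < l \<Longrightarrow> i = j" for i j
  proof (rule ccontr)
    assume h: "x i = x j" "i < l" "j < l" "i \<noteq> j"
    have gen: "x a \<noteq> x b" if "a < b" "b < l" for a b
    proof
      assume "x a = x b"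
      hence "x a * \<omega> ^ ((b - a) * r) = x a * 1"
      proof -
        have "1 + b * r = (1 + a * r) + (b - a) * r" using that by (simp add: diff_mult_distrib)
        hence "x b = \<omega> ^ (1 + a * r) * \<omega> ^ ((b - a) * r)" by (simp add: x_def flip: power_add)
        moreover have "x a = \<omega> ^ (1 + a * r)" by (simp add: x_def)
        ultimately show ?thesis using \<open>x a = x b\<close> by (metis mult_1_right)
      qed
      hence "\<omega> ^ ((b - a) * r) = 1" using x0[of a] mult_left_cancel by blast
      moreover have "0 < (b - a) * r" "(b - a) * r < r * l" using that r by (auto simp: mult.commute)
      ultimately show False using wp by blast
    qed
    show False using h gen by (cases "i < j") (auto, metis linorder_neqE_nat)
  qed
  have \<sigma>l: "\<sigma> j < l" for j using l unfolding \<sigma>_def idx_mod_def by (simp add: nat_less_iff)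
  have \<sigma>x: "x (\<sigma> j) * x j = 1" for j
  proof -
    have "int l dvd (int (\<sigma> j) + int j + int d)"
    proof -
      define a where "a = int l - int d - int j"
      have e: "int (\<sigma> j) = a mod int l" unfolding \<sigma>_def idx_mod_def a_def using l by simp
      have "int (\<sigma> j) + int j + int d = int l - (a - a mod int l)" unfolding e a_def by simp
      moreover have "int l dvd (a - a mod int l)" by (rule dvd_minus_mod)
      ultimately show ?thesis by simp
    qed
    hence "l dvd (\<sigma> j + j + d)" by presburger
    then obtain t where t: "\<sigma> j + j + d = l * t" by blast
    have "(1 + \<sigma> j * r) + (1 + j * r) = r * (\<sigma> j + j + d)" using rd by (simp add: algebra_simps)
    also have "\<dots> = (r * l) * t" by (simp add: t)
    finally have E: "(1 + \<sigma> j * r) + (1 + j * r) = (r * l) * t" .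
    have "x (\<sigma> j) * x j = \<omega> ^ ((1 + \<sigma> j * r) + (1 + j * r))" unfolding x_def by (rule power_add[symmetric])
    also have "\<dots> = (\<omega> ^ (r * l)) ^ t" unfolding E by (rule power_mult)
    finally show ?thesis using w1 by simp
  qed
  have \<sigma>inv: "inverse (x j) = x (\<sigma> j)" for j using \<sigma>x x0 by (metis inverse_unique mult.commute)
  have \<sigma>inj: "inj_on \<sigma> A"
    by (rule inj_onI) (metis \<sigma>inv xinj \<sigma>l A_def atLeastLessThan_iff inverse_inverse_eq)
  have \<sigma>im: "\<sigma> ` A = A"
    by (rule endo_inj_surj) (auto simp: A_def \<sigma>l \<sigma>inj[unfolded A_def])
  have bij: "bij_betw \<sigma> (A - {k}) (A - {\<sigma> k})"
    using \<sigma>inj \<sigma>im k unfolding bij_betw_def A_def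
    by (auto simp: inj_on_diff inj_on_image_set_diff) 
  define P where "P k = (\<Prod>j\<in>A - {k}. [:- x j, 1:])" for k
  define C where "C k = (\<Prod>j\<in>A - {k}. inverse (x k - x j))" for k
  have etaP: "eta \<omega> r l k = smult (C k) (P k)" for k
    unfolding eta_def P_def C_def A_def x_def by (rule prod_smult)
  have C0: "C k \<noteq> 0" if "k < l" for k
    unfolding C_def using that xinj by (auto simp: A_def)
  have degP: "degree (P k) = l - 1" if "k < l" for k
  proof -
    have "degree (P k) = (\<Sum>j\<in>A - {k}. degree [:- x j, 1:])"
      unfolding P_def by (rule degree_prod_sum_eq) simp
    also have "\<dots> = card (A - {k})" by simp
    also have "\<dots> = l - 1" using that by (simp add: A_def)
    finally show ?thesis .
  qed
  have degeta: "degree (eta \<omega> r l k) = l - 1"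
    using C0[OF k] degP[OF k] by (simp add: etaP)
  have "recip (l - 1) (eta \<omega> r l k) = reflect_poly (eta \<omega> r l k)"
    using recip_eq[of "eta \<omega> r l k"] by (simp add: degeta)
  also have "\<dots> = smult (C k) (\<Prod>j\<in>A - {k}. smult (- x j) [:- x (\<sigma> j), 1:])"
    by (simp add: etaP P_def reflect_poly_smult reflect_poly_prod refl_lin x0 \<sigma>inv)
  also have "\<dots> = smult (C k * (\<Prod>j\<in>A - {k}. - x j)) (\<Prod>j\<in>A - {k}. [:- x (\<sigma> j), 1:])"
    by (simp only: prod_smult smult_smult)
  also have "(\<Prod>j\<in>A - {k}. [:- x (\<sigma> j), 1:]) = P (\<sigma> k)"
    unfolding P_def by (rule prod.reindex_bij_betw[OF bij])
  also have "smult (C k * (\<Prod>j\<in>A - {k}. - x j)) (P (\<sigma> k))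
     = smult (C k * (\<Prod>j\<in>A - {k}. - x j) / C (\<sigma> k)) (eta \<omega> r l (\<sigma> k))"
    using C0[OF \<sigma>l[of k]] by (simp add: etaP)
  finally show ?thesis unfolding \<sigma>_def[symmetric]
    using C0[OF k] C0[OF \<sigma>l[of k]] x0 by (intro exI[of _ "C k * (\<Prod>j\<in>A - {k}. - x j) / C (\<sigma> k)"]) (auto simp: A_def)
qed
theorem lemma5:
  fixes \<beta> \<omega> :: "'a::{finite, field}"
    and l r :: nat
  assumes "l \<ge> 1"
    and "\<beta> = 1 \<or> \<beta> = -1"
    and "r > 0" and "\<beta> ^ r = 1" and "\<forall>m. 0 < m \<and> m < r \<longrightarrow> \<beta> ^ m \<noteq> 1"
    and "card (UNIV :: 'a set) mod (r * l) = 1 mod (r * l)"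
    and "\<omega> ^ (r * l) = 1" and "\<forall>m. 0 < m \<and> m < r * l \<longrightarrow> \<omega> ^ m \<noteq> 1"
    and "\<omega> ^ l = \<beta>"
  shows "\<forall>k < l. \<exists>b. b \<noteq> 0 \<and>
           recip (l - 1) (eta \<omega> r l k) =
             (if \<beta> = 1 then smult b (eta \<omega> r l (idx_mod (int l - 2 - int k) l))
              else smult b (eta \<omega> r l (idx_mod (int l - 1 - int k) l)))"
proof (intro allI impI)
  fix k assume k: "k < l"
  show "\<exists>b. b \<noteq> 0 \<and>
           recip (l - 1) (eta \<omega> r l k) =
             (if \<beta> = 1 then smult b (eta \<omega> r l (idx_mod (int l - 2 - int k) l))
              else smult b (eta \<omega> r l (idx_mod (int l - 1 - int k) l)))"
  proof (cases "\<beta> = 1")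
    case True
    have "r = 1"
    proof (rule ccontr)
      assume "r \<noteq> 1"
      hence "0 < (1::nat) \<and> 1 < r" using assms(3) by auto
      thus False using assms(5) True by auto
    qed
    hence "r * 2 = 2" by simp
    from main[OF assms(1) assms(3) this assms(7) assms(8) k] True show ?thesis by simp
  next
    case False
    hence bm: "\<beta> = -1" using assms(2) by auto
    have "r = 2"
    proof (rule ccontr)
      assume "r \<noteq> 2"
      moreover have "r \<noteq> 1" using assms(4) False by (auto)
      ultimately have "0 < (2::nat) \<and> 2 < r" using assms(3) by auto
      hence "\<beta> ^ 2 \<noteq> 1" using assms(5) by blast
      thus False using bm by simp
    qed
    hence "r * 1 = 2" by simp
    from main[OF assms(1) assms(3) this assms(7) assms(8) k] False show ?thesis by simp
  qed
qed

end
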